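(* Let $p$ be a prime number and let $a$ be an integer not divisible by $p$. Then the sequence $$\left(\vartheta_p\left(\sum_{k=1}^{n}\left(\frac{1}{a^k}+\frac{1}{(p-a)^k}\right)\frac{p^k}{k}\right)\right)_{n\geq 1}$$ is unbounded from above.
   Context: For a prime $p$ and a rational number $r$, $\vartheta_p(r)$ denotes the $p$-adic valuation of $r$ (with $\vartheta_p(0)=+\infty$). *)

theory Defs
  imports "HOL-Computational_Algebra.Computational_Algebra" "HOL-Library.Extended_Real"
begin

definition padic_val_rat :: "nat \<Rightarrow> rat \<Rightarrow> ereal" where
  "padic_val_rat p r =
     (if r = 0 then \<infinity>
      else (case quotient_of r of (n, d) \<Rightarrow>
              ereal (real_of_int (int (multiplicity (int p) n) - int (multiplicity (int p) d)))))"

end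

theory Submission
  imports Defs
begin


definition good :: "nat \<Rightarrow> nat \<Rightarrow> rat \<Rightarrow> bool" where
  "good p N q \<longleftrightarrow> (\<exists>r s::int. \<not> int p dvd s \<and> q = of_int r * of_nat p ^ N / of_int s)"

lemma good_0: "prime p \<Longrightarrow> good p N 0"
  unfolding good_def by (rule exI[of _ 0], rule exI[of _ 1]) (auto simp: prime_gt_1_nat)

lemma good_add:
  assumes "prime p" "good p N x" "good p N y" shows "good p N (x + y)"
proof -
  obtain r s where 1: "\<not> int p dvd s" "x = of_int r * of_nat p ^ N / of_int s" using assms(2) good_def by blast
  obtain r' s' where 2: "\<not> int p dvd s'" "y = of_int r' * of_nat p ^ N / of_int s'" using assms(3) good_def by blast
  have s0: "s \<noteq> 0" "s' \<noteq> 0" using 1 2 by auto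
  have "\<not> int p dvd s * s'" using 1 2 assms(1) by (simp add: prime_dvd_mult_iff)
  moreover have "x + y = of_int (r * s' + r' * s) * of_nat p ^ N / of_int (s * s')"
    using s0 by (simp add: 1 2 field_simps)
  ultimately show ?thesis unfolding good_def by blast
qed

lemma good_mult:
  assumes "prime p" "good p N x" "good p M y" shows "good p (N + M) (x * y)"
proof -
  obtain r s where 1: "\<not> int p dvd s" "x = of_int r * of_nat p ^ N / of_int s" using assms(2) good_def by blast
  obtain r' s' where 2: "\<not> int p dvd s'" "y = of_int r' * of_nat p ^ M / of_int s'" using assms(3) good_def by blast
  have s0: "s \<noteq> 0" "s' \<noteq> 0" using 1 2 by auto
  have "\<not> int p dvd s * s'" using 1 2 assms(1) by (simp add: prime_dvd_mult_iff)
  moreover have "x * y = of_int (r * r') * of_nat p ^ (N + M) / of_int (s * s')"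
    using s0 by (simp add: 1 2 field_simps power_add)
  ultimately show ?thesis unfolding good_def by blast
qed

lemma good_mono:
  assumes "good p N x" "M \<le> N" shows "good p M x"
proof -
  obtain r s where 1: "\<not> int p dvd s" "x = of_int r * of_nat p ^ N / of_int s" using assms(1) good_def by blast
  have "x = of_int (r * int p ^ (N - M)) * of_nat p ^ M / of_int s"
    using assms(2) by (simp add: 1 power_add[symmetric])
  thus ?thesis using 1 unfolding good_def by blast
qed

lemma good_int: "prime p \<Longrightarrow> good p 0 (of_int r)"
  unfolding good_def by (rule exI[of _ r], rule exI[of _ 1]) (auto simp: prime_gt_1_nat)

lemma good_inv: "\<not> int p dvd s \<Longrightarrow> good p 0 (1 / of_int s)"
  unfolding good_def by (rule exI[of _ 1], rule exI[of _ s]) (auto simp: prime_gt_1_nat)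

lemma good_pow: "prime p \<Longrightarrow> good p N (of_nat p ^ N)"
  unfolding good_def by (rule exI[of _ 1], rule exI[of _ 1]) (auto simp: prime_gt_1_nat)

lemma good_sum:
  assumes "prime p" "\<And>i. i \<in> A \<Longrightarrow> good p N (f i)" shows "good p N (sum f A)"
  using assms(2)
proof (induction A rule: infinite_finite_induct)
  case (infinite A) then show ?case by (simp add: good_0 assms(1))
next
  case empty then show ?case by (simp add: good_0 assms(1))
next
  case (insert x F) then show ?case by (simp add: good_add assms(1))
qed

lemma good_k:
  assumes "prime p" "1 \<le> k" "k \<le> p ^ m" shows "good p 0 (of_nat p ^ m / of_nat k)"
proof -
  have k0: "k \<noteq> 0" using assms by auto
  obtain y where y: "k = p ^ multiplicity p k * y" "\<not> p dvd y"
    using multiplicity_decompose'[of k p] k0 assms(1) by (metis not_prime_unit)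
  let ?e = "multiplicity p k"
  have y0: "y > 0" using y k0 by (metis gr0I mult_0_right)
  have "p ^ ?e \<le> k" using y y0 by (metis dvd_imp_le dvd_triv_left k0 neq0_conv)
  hence "p ^ ?e \<le> p ^ m" using assms by linarith
  hence em: "?e \<le> m" using assms(1) by (meson power_le_imp_le_exp prime_gt_1_nat)
  have "of_nat p ^ m / of_nat k = (of_int 1 * of_nat p ^ (m - ?e) / of_int (int y) :: rat)"
    using em y0 assms(1) by (subst y(1)) (simp add: field_simps power_add[symmetric] prime_gt_0_nat)
  moreover have "\<not> int p dvd int y" using y by simp
  ultimately have "good p (m - ?e) (of_nat p ^ m / of_nat k)" unfolding good_def by blast
  thus ?thesis using good_mono by blast
qed

lemma good_val:
  assumes "prime p" "good p N q" "q \<noteq> 0" "N \<ge> 1"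
  shows "padic_val_rat p q \<ge> ereal (real N)"
proof -
  obtain r s where 1: "\<not> int p dvd s" "q = of_int r * of_nat p ^ N / of_int s" using assms(2) good_def by blast
  obtain n d where nd: "quotient_of q = (n, d)" by (cases "quotient_of q") auto
  have d0: "d > 0" using nd quotient_of_denom_pos by blast
  have cop: "coprime n d" using nd quotient_of_coprime by blast
  have qnd: "q = of_int n / of_int d" using nd quotient_of_div by blast
  have s0: "s \<noteq> 0" using 1 by auto
  have "of_int n * of_int s = (of_int (r * int p ^ N * d) :: rat)"
    using 1 qnd s0 d0 by (auto simp: field_simps)
  hence eq: "n * s = r * int p ^ N * d" by (metis of_int_eq_iff of_int_mult)
  have pp: "prime (int p)" using assms(1) by simp
  have "int p ^ N dvd n * s" using eq by simp
  moreover have "coprime (int p ^ N) s" using 1 pp by (simp add: prime_imp_coprime)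
  ultimately have dn: "int p ^ N dvd n" using coprime_dvd_mult_left_iff by blast
  have n0: "n \<noteq> 0" using assms(3) qnd by auto
  have mn: "multiplicity (int p) n \<ge> N" using dn n0 pp
    by (metis multiplicity_geI not_prime_unit)
  have "int p dvd int p ^ N" using assms(4) by (intro dvd_power) simp
  hence "int p dvd n" using dn by (rule dvd_trans)
  hence "\<not> int p dvd d" using cop pp
    by (meson coprime_common_divisor not_prime_unit)
  hence md: "multiplicity (int p) d = 0" by (rule not_dvd_imp_multiplicity_0)
  show ?thesis unfolding padic_val_rat_def using assms(3) nd mn md by simp
qed



abbreviation XX :: "rat poly" where "XX \<equiv> monom 1 1"
abbreviation WW :: "rat poly" where "WW \<equiv> 1 - monom 1 1"

fun Pn :: "nat \<Rightarrow> rat poly" where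
  "Pn 0 = 0"
| "Pn (Suc n) = WW * Pn n + smult (1 / of_nat (Suc n)) (XX ^ Suc n * (WW ^ Suc n + (-1) ^ Suc n))"

lemma pderiv_X: "pderiv XX = 1"
  by (simp add: pderiv_monom)

lemma pderiv_W: "pderiv WW = -1"
  by (simp add: pderiv_monom pderiv_diff)

lemma ode: "WW * pderiv (Pn n) + smult (of_nat n) (Pn n) = XX ^ n * ((-1) ^ n - WW ^ n)"
proof (induction n)
  case 0 then show ?case by simp
next
  case (Suc n)
  let ?Q = "Pn n"
  let ?c = "1 / of_nat (Suc n) :: rat"
  let ?T = "XX ^ Suc n * (WW ^ Suc n + (-1) ^ Suc n)"
  have pm1: "pderiv ((-1::rat poly) ^ k) = 0" for k
    by (induction k) (simp_all add: pderiv_mult pderiv_minus)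
  have dT: "pderiv ?T = XX ^ Suc n * (smult (of_nat (Suc n)) (WW ^ n) * (-1))
                + (WW ^ Suc n + (-1) ^ Suc n) * (smult (of_nat (Suc n)) (XX ^ n))"
    by (simp only: pderiv_mult pderiv_add pm1 pderiv_power_Suc pderiv_X pderiv_W) (simp add: pderiv_minus)
  have cT: "smult ?c (pderiv ?T) = - (XX ^ Suc n * WW ^ n) + (WW ^ Suc n + (-1) ^ Suc n) * XX ^ n"
  proof -
    have c1: "1 / (1 + of_nat n) * (1 + of_nat n) = (1::rat)" by (simp add: field_simps)
    show ?thesis unfolding dT by (simp add: smult_add_right smult_diff_right c1)
  qed
  have cT2: "smult (of_nat (Suc n)) (smult ?c ?T) = ?T" by simp
  have dP: "pderiv (Pn (Suc n)) = WW * pderiv ?Q - ?Q + smult ?c (pderiv ?T)"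
    by (simp add: pderiv_mult pderiv_add pderiv_smult pderiv_diff pderiv_monom)
  have "WW * pderiv (Pn (Suc n)) + smult (of_nat (Suc n)) (Pn (Suc n))
      = WW * (WW * pderiv ?Q + smult (of_nat n) ?Q) + WW * smult ?c (pderiv ?T)
        + smult (of_nat (Suc n)) (smult ?c ?T)"
  proof -
    have s1: "smult (of_nat (Suc n)) (WW * ?Q + smult ?c ?T) = WW * smult (of_nat n) ?Q + WW * ?Q + smult (of_nat (Suc n)) (smult ?c ?T)"
      by (simp only: smult_add_right of_nat_Suc smult_add_left mult_smult_right smult_one) (simp add: algebra_simps)
    have gen: "\<And>W Q' Q C A B :: rat poly. W*(W*Q' - Q + C) + (W*A + W*Q + B) = W*(W*Q'+A) + W*C + B"
      by algebra
    show ?thesis unfolding dP unfolding Pn.simps(2) s1 by (rule gen)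
  qed
  also have "\<dots> = WW * (XX ^ n * ((-1) ^ n - WW ^ n)) + WW * (- (XX ^ Suc n * WW ^ n) + (WW ^ Suc n + (-1) ^ Suc n) * XX ^ n) + ?T"
    unfolding Suc.IH cT cT2 ..
  also have "\<dots> = XX ^ Suc n * ((-1) ^ Suc n - WW ^ Suc n)"
  proof -
    have gen: "\<And>X A B s :: rat poly. (1 - X) * (A * (s - B)) + (1 - X) * (- (X * A * B) + ((1 - X) * B + -1 * s) * A)
          + (X * A) * ((1 - X) * B + -1 * s) = (X * A) * (-1 * s - (1 - X) * B)"
      by algebra
    show ?thesis using gen[where X=XX and A="XX ^ n" and B="WW ^ n" and s="(-1)^n"] by (simp only: power_Suc) 
  qed
  finally show ?case .
qed



lemma XXpow: "XX ^ k = monom 1 k" "monom 1 (Suc 0) ^ k = monom 1 k"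
  by (simp_all add: monom_power)

lemma coeffW1: "coeff ((1 - monom 1 (Suc 0)) * (Q::rat poly)) j = coeff Q j - (if j = 0 then 0 else coeff Q (j - 1))"
proof -
  have "(1 - monom 1 (Suc 0)) * Q = Q - monom 1 (Suc 0) * Q" by (simp add: algebra_simps)
  thus ?thesis by (simp add: coeff_monom_mult)
qed

lemma coeffW: "coeff ((1 - monom 1 (Suc 0)) * (Q::rat poly)) j = coeff Q j - (if j = 0 then 0 else coeff Q (j - 1))"
   "coeff (WW * (Q::rat poly)) j = coeff Q j - (if j = 0 then 0 else coeff Q (j - 1))"
  using coeffW1 by simp_all

lemma coeff0: "coeff (Pn n) 0 = 0"
  by (induction n) (simp_all add: coeffW XXpow coeff_monom_mult del: power_Suc)

lemma vanish: "j \<le> n \<Longrightarrow> coeff (Pn n) j = 0"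
proof (induction j)
  case 0 then show ?case by (simp add: coeff0)
next
  case (Suc j)
  have jn: "j < n" using Suc.prems by simp
  have cj: "coeff (Pn n) j = 0" using Suc jn by simp
  have "coeff (WW * pderiv (Pn n) + smult (of_nat n) (Pn n)) j = coeff (XX ^ n * ((-1) ^ n - WW ^ n)) j"
    using ode[of n] by simp
  also have "\<dots> = 0" using jn by (simp add: XXpow coeff_monom_mult)
  finally have "of_nat (Suc j) * coeff (Pn n) (Suc j) = 0"
    using cj by (cases j) (simp_all add: coeffW coeff_pderiv)
  thus ?case by simp
qed

definition IP :: "rat poly \<Rightarrow> bool" where "IP q \<longleftrightarrow> (\<forall>j. coeff q j \<in> \<int>)"

lemma IP_mult: "IP p \<Longrightarrow> IP q \<Longrightarrow> IP (p * q)"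
  unfolding IP_def coeff_mult by (auto intro!: Ints_sum Ints_mult)

lemma IP_add: "IP p \<Longrightarrow> IP q \<Longrightarrow> IP (p + q)"
  unfolding IP_def by auto

lemma IP_diff: "IP p \<Longrightarrow> IP q \<Longrightarrow> IP (p - q)"
  unfolding IP_def by auto

lemma IP_one: "IP 1"
  unfolding IP_def by (auto simp: coeff_1)

lemma IP_X: "IP XX"
  unfolding IP_def by (auto simp: coeff_monom)

lemma IP_neg1: "IP (-1)"
  unfolding IP_def by (auto simp: coeff_1)

lemma IP_pow: "IP p \<Longrightarrow> IP (p ^ k)"
  by (induction k) (auto intro: IP_mult IP_one)

lemma IP_T: "IP (XX ^ k * (WW ^ k + (-1) ^ k))"
  by (intro IP_mult IP_pow IP_add IP_diff IP_X IP_one IP_neg1)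

lemma good_neg: "prime p \<Longrightarrow> good p N x \<Longrightarrow> good p N (- x)"
  using good_mult[of p 0 "of_int (-1)" N x] good_int[of p "-1"] by simp

lemma PG: "prime p \<Longrightarrow> n \<le> p ^ m \<Longrightarrow> good p 0 (coeff (Pn n) j * of_nat p ^ m)"
proof (induction n arbitrary: j)
  case 0 then show ?case by (simp add: good_0)
next
  case (Suc n)
  let ?T = "XX ^ Suc n * (WW ^ Suc n + (-1) ^ Suc n)"
  obtain r where r: "coeff ?T j = of_int r" using IP_T[of "Suc n"] unfolding IP_def by (meson Ints_cases)
  have e: "coeff (Pn (Suc n)) j * of_nat p ^ m =
       coeff (Pn n) j * of_nat p ^ m + - ((if j = 0 then 0 else coeff (Pn n) (j - 1)) * of_nat p ^ m)
       + (of_nat p ^ m / of_nat (Suc n)) * of_int r"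
    by (simp only: Pn.simps coeff_add coeff_smult coeffW r) (simp add: algebra_simps)
  have g1: "good p 0 (coeff (Pn n) i * of_nat p ^ m)" for i using Suc by simp
  have g2: "good p 0 ((if j = 0 then 0 else coeff (Pn n) (j - 1)) * of_nat p ^ m)"
    using g1 Suc.prems by (simp add: good_0)
  have g3: "good p 0 ((of_nat p ^ m / of_nat (Suc n)) * of_int r)"
    using good_mult[OF Suc.prems(1) good_k[OF Suc.prems(1), of "Suc n" m] good_int[OF Suc.prems(1), of r]] Suc.prems by simp
  show ?case unfolding e
    by (rule good_add[OF Suc.prems(1) good_add[OF Suc.prems(1) g1 good_neg[OF Suc.prems(1) g2]] g3])
qed



lemma evalP:
  assumes "x \<noteq> 1"
  shows "poly (Pn n) x = (1 - x) ^ n * (\<Sum>k=1..n. (x ^ k + (- x / (1 - x)) ^ k) / of_nat k)"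
proof (induction n)
  case 0 then show ?case by simp
next
  case (Suc n)
  let ?S = "\<Sum>k=1..n. (x ^ k + (- x / (1 - x)) ^ k) / of_nat k"
  have x1: "1 - x \<noteq> 0" using assms by simp
  have y: "(1 - x) ^ Suc n * (- x / (1 - x)) ^ Suc n = (-1) ^ Suc n * x ^ Suc n"
  proof -
    have "(1 - x) ^ Suc n * (- x / (1 - x)) ^ Suc n = ((1 - x) * (- x / (1 - x))) ^ Suc n"
      by (rule power_mult_distrib[symmetric])
    also have "(1 - x) * (- x / (1 - x)) = - x" using x1 by simp
    also have "(- x) ^ Suc n = (-1) ^ Suc n * x ^ Suc n" by (rule power_minus)
    finally show ?thesis .
  qed
  have "poly (Pn (Suc n)) x = (1 - x) * poly (Pn n) x + (x ^ Suc n * ((1 - x) ^ Suc n + (-1) ^ Suc n)) / of_nat (Suc n)"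
    by (simp add: poly_monom XXpow del: power_Suc of_nat_Suc)
  also have "\<dots> = (1 - x) ^ Suc n * ?S
      + ((1 - x) ^ Suc n * x ^ Suc n + (1 - x) ^ Suc n * (- x / (1 - x)) ^ Suc n) / of_nat (Suc n)"
    unfolding Suc.IH y by (simp only: power_Suc) (simp add: algebra_simps)
  also have "\<dots> = (1 - x) ^ Suc n * (?S + (x ^ Suc n + (- x / (1 - x)) ^ Suc n) / of_nat (Suc n))"
    by (simp only: distrib_left add_divide_distrib times_divide_eq_right)
  also have "\<dots> = (1 - x) ^ Suc n * (\<Sum>k=1..Suc n. (x ^ k + (- x / (1 - x)) ^ k) / of_nat k)"
    by (simp only: sum.cl_ivl_Suc) simp
  finally show ?case .
qed



lemma two_m: "2 * m \<le> (2::nat) ^ m"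
proof (induction m)
  case 0 then show ?case by simp
next
  case (Suc m)
  show ?case
  proof (cases m)
    case 0 then show ?thesis by simp
  next
    case (Suc k)
    have "2 \<le> (2::nat) ^ m" using Suc by (simp add: Suc_le_eq)
    then show ?thesis using \<open>2 * m \<le> 2 ^ m\<close> by simp
  qed
qed

theorem theorem3:
  fixes p :: nat and a :: int
  assumes "prime p" and "\<not> int p dvd a"
  shows "\<forall>M::real. \<exists>n::nat. n \<ge> 1 \<and>
           padic_val_rat p (\<Sum>k=1..n. (1 / of_int a ^ k + 1 / of_int (int p - a) ^ k)
                                       * of_nat p ^ k / of_nat k) > ereal M"
proof
  fix M :: real
  have pp: "prime p" by fact
  have p2: "p \<ge> 2" using pp by (simp add: prime_ge_2_nat)
  define m where "m = nat \<lceil>M\<rceil> + 1"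
  define n where "n = p ^ m"
  define N where "N = n + 1 - m"
  have "2 * m \<le> 2 ^ m" by (rule two_m)
  also have "(2::nat) ^ m \<le> p ^ m" using p2 by (simp add: power_mono)
  finally have mn: "2 * m \<le> n" unfolding n_def .
  have N1: "N \<ge> m + 1" unfolding N_def using mn by simp
  have "M < real m" unfolding m_def by linarith
  hence NM: "M < real N" using N1 by simp
  have n1: "n \<ge> 1" unfolding n_def using p2 by simp
  have a0: "a \<noteq> 0" using assms(2) by auto
  have ap: "a \<noteq> int p" using assms(2) by auto
  have pi: "prime (int p)" using pp by simp
  have ndvd: "\<not> int p dvd (a - int p) ^ j" for j
  proof
    assume "int p dvd (a - int p) ^ j"
    hence "int p dvd a - int p" using pi prime_dvd_power by blast
    hence "int p dvd a" by (metis dvd_diff_commute dvd_refl dvd_add_right_iff diff_add_cancel)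
    thus False using assms(2) by simp
  qed
  have ndvda: "\<not> int p dvd a ^ j" for j
    using assms(2) pi prime_dvd_power by blast
  define x :: rat where "x = of_nat p / of_int a"
  have x1: "x \<noteq> 1" unfolding x_def using a0 ap by (simp add: field_simps)
  have ya: "- x / (1 - x) = of_nat p / of_int (int p - a)"
    unfolding x_def using a0 ap by (simp add: field_simps)
  let ?S = "\<Sum>k=1..n. (1 / of_int a ^ k + 1 / of_int (int p - a) ^ k) * of_nat p ^ k / (of_nat k :: rat)"
  have S1: "?S = (\<Sum>k=1..n. (x ^ k + (- x / (1 - x)) ^ k) / of_nat k)"
    unfolding ya unfolding x_def by (rule sum.cong) (simp_all add: power_divide field_simps)
  have x1': "(1 - x) ^ n \<noteq> 0" using x1 by simp
  have S2: "?S = poly (Pn n) x * (1 / (1 - x) ^ n)"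
    unfolding S1 evalP[OF x1] using x1' by simp
  have inv: "1 / (1 - x) ^ n = of_int (a ^ n) * (1 / of_int ((a - int p) ^ n))"
    unfolding x_def using a0 ap by (simp add: field_simps power_divide)
  have ginv: "good p 0 (1 / (1 - x) ^ n)"
    unfolding inv using good_mult[OF pp good_int[OF pp, of "a ^ n"] good_inv[OF ndvd[of n]]] by simp
  have gterm: "good p N (coeff (Pn n) j * x ^ j)" for j
  proof (cases "j \<le> n")
    case True then show ?thesis by (simp add: vanish good_0 pp)
  next
    case False
    hence jm: "j \<ge> m" "j - m \<ge> N" using mn unfolding N_def by auto
    have "coeff (Pn n) j * x ^ j = (coeff (Pn n) j * of_nat p ^ m) * (of_nat p ^ (j - m) * (1 / of_int (a ^ j)))"
      unfolding x_def using jm(1) a0 by (simp add: power_divide power_add[symmetric])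
    moreover have "good p (0 + ((j - m) + 0)) \<dots>"
      by (intro good_mult pp PG good_pow good_inv ndvda) (simp add: n_def)
    ultimately show ?thesis using good_mono jm(2) by (metis add_0 add_0_right)
  qed
  have gS: "good p N ?S"
  proof -
    have "good p N (poly (Pn n) x)" unfolding poly_altdef by (intro good_sum pp gterm)
    hence "good p (N + 0) (poly (Pn n) x * (1 / (1 - x) ^ n))" by (intro good_mult pp ginv)
    thus ?thesis unfolding S2 by simp
  qed
  have main: "padic_val_rat p ?S > ereal M"
  proof (cases "?S = 0")
    case True then show ?thesis by (simp add: padic_val_rat_def)
  next
    case False
    have le: "ereal (real N) \<le> padic_val_rat p ?S" using good_val[OF pp gS False] N1 by simp
    have lt: "ereal M < ereal (real N)" using NM by simp
    show ?thesis by (rule less_le_trans[OF lt le])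
  qed
  show "\<exists>n::nat. n \<ge> 1 \<and>
           padic_val_rat p (\<Sum>k=1..n. (1 / of_int a ^ k + 1 / of_int (int p - a) ^ k)
                                       * of_nat p ^ k / of_nat k) > ereal M"
    using n1 main by blast
qed

end
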